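(* A function $f:(0,\infty)\to(0,\infty)$ is stable, i.e. satisfies $|f(x)-f(y)|\le\sqrt{\frac{f(x)f(y)}{xy}}\,|x-y|$ for all $x,y>0$, if and only if $x\mapsto f(x)/x$ is non-increasing and $x\mapsto xf(x)$ is non-decreasing. *)

theory Defs
  imports Complex_Main
begin

definition stable :: "(real \<Rightarrow> real) \<Rightarrow> bool" where
  "stable f \<longleftrightarrow> (\<forall>x>0. \<forall>y>0. \<bar>f x - f y\<bar> \<le> sqrt (f x * f y / (x * y)) * \<bar>x - y\<bar>)"

end

theory Submission
  imports Defs
begin

lemma key:
  fixes a b x y :: real
  assumes a: "a > 0" and b: "b > 0" and x: "x > 0" and y: "y > 0"
  shows "\<bar>a - b\<bar> \<le> sqrt (a * b / (x * y)) * \<bar>x - y\<bar> \<longleftrightarrow> (a*y - b*x) * (a*x - b*y) \<le> 0"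
proof -
  have e1: "sqrt (a * b / (x * y)) * \<bar>x - y\<bar> = sqrt (a * b / (x * y) * (x - y)^2)"
    by (simp only: real_sqrt_mult real_sqrt_abs)
  have "\<bar>a - b\<bar> \<le> sqrt (a * b / (x * y) * (x - y)^2) \<longleftrightarrow> (a - b)^2 \<le> a * b / (x * y) * (x - y)^2"
    by (metis abs_ge_zero real_le_rsqrt real_sqrt_abs real_sqrt_le_iff)
  also have "\<dots> \<longleftrightarrow> (a - b)^2 * (x*y) \<le> a * b * (x - y)^2"
    using x y by (simp add: field_simps)
  also have "\<dots> \<longleftrightarrow> (a*y - b*x) * (a*x - b*y) \<le> 0"
    by (simp add: algebra_simps power2_eq_square)
  finally show ?thesis using e1 by simp
qed

theorem mainTheorem7:
  fixes f :: "real \<Rightarrow> real"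
  assumes pos: "\<And>x. x > 0 \<Longrightarrow> f x > 0"
  shows "stable f \<longleftrightarrow>
           ((\<forall>x>0. \<forall>y>0. x \<le> y \<longrightarrow> f y / y \<le> f x / x) \<and>
            (\<forall>x>0. \<forall>y>0. x \<le> y \<longrightarrow> x * f x \<le> y * f y))"
proof
  assume s: "stable f"
  have m: "f x * y - f y * x \<ge> 0 \<and> f x * x - f y * y \<le> 0" if "x > 0" "y > 0" "x \<le> y" for x y
  proof -
    have fx: "f x > 0" and fy: "f y > 0" using pos that by auto
    have p: "(f x*y - f y*x) * (f x*x - f y*y) \<le> 0"
      using s key[OF fx fy that(1,2)] that unfolding stable_def by blast
    have d: "(f x*y - f y*x) - (f x*x - f y*y) = (f x + f y) * (y - x)" by (simp add: algebra_simps)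
    have "(f x + f y) * (y - x) \<ge> 0" using fx fy that by simp
    hence "(f x*y - f y*x) \<ge> (f x*x - f y*y)" using d by linarith
    thus ?thesis using p
      by (smt (verit, best) mult_neg_neg mult_pos_pos)
  qed
  show "((\<forall>x>0. \<forall>y>0. x \<le> y \<longrightarrow> f y / y \<le> f x / x) \<and>
            (\<forall>x>0. \<forall>y>0. x \<le> y \<longrightarrow> x * f x \<le> y * f y))"
  proof (intro conjI allI impI)
    fix x y :: real assume h: "x > 0" "y > 0" "x \<le> y"
    from m[OF h] have "f y * x \<le> f x * y" by simp
    thus "f y / y \<le> f x / x" using h by (simp add: divide_simps mult.commute)
    from m[OF h] show "x * f x \<le> y * f y" by (simp add: mult.commute)
  qed
next
  assume c: "((\<forall>x>0. \<forall>y>0. x \<le> y \<longrightarrow> f y / y \<le> f x / x) \<and>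
            (\<forall>x>0. \<forall>y>0. x \<le> y \<longrightarrow> x * f x \<le> y * f y))"
  have w: "(f x*y - f y*x) * (f x*x - f y*y) \<le> 0" if h: "x > 0" "y > 0" "x \<le> y" for x y
  proof -
    have "f y / y \<le> f x / x" using c h by blast
    hence "f y * x \<le> f x * y" using h by (simp add: divide_simps mult.commute)
    moreover have "x * f x \<le> y * f y" using c h by blast
    ultimately show ?thesis
      by (intro mult_nonneg_nonpos) (auto simp: mult.commute)
  qed
  show "stable f" unfolding stable_def
  proof (intro allI impI)
    fix x y :: real assume x: "x > 0" and y: "y > 0"
    have "(f x*y - f y*x) * (f x*x - f y*y) \<le> 0"
    proof (cases "x \<le> y")
      case True then show ?thesis using w x y by blast
    next
      case False
      have "(f y*x - f x*y) * (f y*y - f x*x) \<le> 0" using w[of y x] x y False by simp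
      thus ?thesis by (simp add: algebra_simps)
    qed
    thus "\<bar>f x - f y\<bar> \<le> sqrt (f x * f y / (x * y)) * \<bar>x - y\<bar>"
      using key[OF pos[OF x] pos[OF y] x y] by blast
  qed
qed

end
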